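(* Let $G$ be a Frobenius group whose Frobenius kernel $N$ is elementary abelian of order $p^2$ ($p$ prime) and whose Frobenius complement $C$ has prime order $q$. Then: (1) if $q\nmid p-1$, then $G\in\mathcal{D}_{\frac{p+1}{q}+1}$; (2) if $q\mid p-1$, then either $G\in\mathcal{D}_{p+2}$ (and this always happens when $q=2$) or $G\in\mathcal{D}_{\frac{p-1}{q}+3}$.
   Context: $\mathcal{D}(G)$ denotes the number of conjugacy classes of nontrivial subgroups $H$ of the finite group $G$ with $N_G(H)\neq H$; $\mathcal{D}_n$ is the family of finite groups $G$ with $\mathcal{D}(G)=n$. *)

theory Defs
  imports "HOL-Algebra.Algebra"
begin

definition conj_set :: "('a, 'b) monoid_scheme \<Rightarrow> 'a \<Rightarrow> 'a set \<Rightarrow> 'a set" where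
  "conj_set G g H = g <#\<^bsub>G\<^esub> H #>\<^bsub>G\<^esub> inv\<^bsub>G\<^esub> g"

definition conj_class :: "('a, 'b) monoid_scheme \<Rightarrow> 'a set \<Rightarrow> 'a set set" where
  "conj_class G H = {conj_set G g H | g. g \<in> carrier G}"

definition D_subgroups :: "('a, 'b) monoid_scheme \<Rightarrow> 'a set set" where
  "D_subgroups G = {H. subgroup H G \<and> H \<noteq> {\<one>\<^bsub>G\<^esub>} \<and> normalizer G H \<noteq> H}"

definition D_count :: "('a, 'b) monoid_scheme \<Rightarrow> nat" where
  "D_count G = card (conj_class G ` D_subgroups G)"

definition frobenius_complement :: "('a, 'b) monoid_scheme \<Rightarrow> 'a set \<Rightarrow> bool" where
  "frobenius_complement G C \<longleftrightarrow> subgroup C G \<and> C \<noteq> {\<one>\<^bsub>G\<^esub>} \<and> C \<noteq> carrier G \<and>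
     (\<forall>g \<in> carrier G - C. C \<inter> conj_set G g C = {\<one>\<^bsub>G\<^esub>})"

definition frobenius_kernel :: "('a, 'b) monoid_scheme \<Rightarrow> 'a set \<Rightarrow> 'a set" where
  "frobenius_kernel G C = (carrier G - (\<Union>g \<in> carrier G. conj_set G g C)) \<union> {\<one>\<^bsub>G\<^esub>}"

definition elementary_abelian :: "('a, 'b) monoid_scheme \<Rightarrow> 'a set \<Rightarrow> nat \<Rightarrow> bool" where
  "elementary_abelian G N p \<longleftrightarrow> subgroup N G \<and>
     (\<forall>x \<in> N. \<forall>y \<in> N. x \<otimes>\<^bsub>G\<^esub> y = y \<otimes>\<^bsub>G\<^esub> x) \<and>
     (\<forall>x \<in> N. x [^]\<^bsub>G\<^esub> p = \<one>\<^bsub>G\<^esub>)"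

end

theory Submission imports Defs "HOL-Number_Theory.Number_Theory" begin
lemma prime_dvd_cases: "Factorial_Ring.prime (r::nat) \<Longrightarrow> d dvd r \<Longrightarrow> d = 1 \<or> d = r"
  using prime_nat_iff by auto

context group begin

lemma inv_cancel_l [simp]: "x \<in> carrier G \<Longrightarrow> y \<in> carrier G \<Longrightarrow> inv x \<otimes> (x \<otimes> y) = y"
  by (simp add: m_assoc[symmetric])
lemma inv_cancel_l2 [simp]: "x \<in> carrier G \<Longrightarrow> y \<in> carrier G \<Longrightarrow> x \<otimes> (inv x \<otimes> y) = y"
  by (simp add: m_assoc[symmetric])

lemma conj_set_eq:
  assumes "g \<in> carrier G" "H \<subseteq> carrier G"
  shows "conj_set G g H = (\<lambda>h. g \<otimes> h \<otimes> inv g) ` H"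
  unfolding conj_set_def l_coset_def r_coset_def by auto

lemma conj_set_sub:
  assumes "g \<in> carrier G" "H \<subseteq> carrier G"
  shows "conj_set G g H \<subseteq> carrier G"
  using assms by (auto simp: conj_set_eq)

lemma conj_set_mem:
  assumes "g \<in> carrier G" "H \<subseteq> carrier G" "x \<in> carrier G"
  shows "x \<in> conj_set G g H \<longleftrightarrow> inv g \<otimes> x \<otimes> g \<in> H"
proof
  assume "x \<in> conj_set G g H"
  then obtain h where h: "h \<in> H" "x = g \<otimes> h \<otimes> inv g" using assms by (auto simp: conj_set_eq)
  have "h \<in> carrier G" using h assms by auto
  then have "inv g \<otimes> x \<otimes> g = h" using h assms by (simp add: m_assoc)
  then show "inv g \<otimes> x \<otimes> g \<in> H" using h by simp
next
  assume a: "inv g \<otimes> x \<otimes> g \<in> H"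
  have "g \<otimes> (inv g \<otimes> x \<otimes> g) \<otimes> inv g = x" using assms by (simp add: m_assoc)
  then have "x \<in> (\<lambda>h. g \<otimes> h \<otimes> inv g) ` H" using a by (metis image_eqI)
  then show "x \<in> conj_set G g H" using assms by (simp add: conj_set_eq)
qed

lemma conj_set_comp:
  assumes "g \<in> carrier G" "h \<in> carrier G" "H \<subseteq> carrier G"
  shows "conj_set G g (conj_set G h H) = conj_set G (g \<otimes> h) H"
proof -
  have "conj_set G h H \<subseteq> carrier G" using assms conj_set_sub by auto
  then show ?thesis using assms
    by (auto simp: conj_set_eq image_iff inv_mult_group m_assoc subsetD)
qed

lemma conj_set_one:
  assumes "H \<subseteq> carrier G"
  shows "conj_set G \<one> H = H"
  using assms by (auto simp: conj_set_eq subsetD)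

lemma conj_set_card:
  assumes "g \<in> carrier G" "H \<subseteq> carrier G"
  shows "card (conj_set G g H) = card H"
proof -
  have "inj_on (\<lambda>h. g \<otimes> h \<otimes> inv g) H"
    using assms by (intro inj_onI) (auto simp: subsetD)
  then show ?thesis using assms by (simp add: conj_set_eq card_image)
qed

lemma conj_set_subgroup:
  assumes "g \<in> carrier G" "subgroup H G"
  shows "subgroup (conj_set G g H) G"
proof -
  have Hs: "H \<subseteq> carrier G" using assms subgroup.subset by blast
  show ?thesis
  proof (rule subgroupI)
    show "conj_set G g H \<subseteq> carrier G" using conj_set_sub assms Hs by auto
    show "conj_set G g H \<noteq> {}" using assms Hs subgroup.one_closed by (auto simp: conj_set_eq)
  next
    fix a assume "a \<in> conj_set G g H"
    then obtain h where h: "h \<in> H" "a = g \<otimes> h \<otimes> inv g" using assms Hs by (auto simp: conj_set_eq)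
    have hc: "h \<in> carrier G" using h Hs by auto
    have "inv a = g \<otimes> inv h \<otimes> inv g" using h hc assms by (simp add: inv_mult_group m_assoc)
    moreover have "inv h \<in> H" by (rule subgroup.m_inv_closed[OF assms(2) h(1)])
    ultimately show "inv a \<in> conj_set G g H" using assms Hs by (simp add: conj_set_eq)
  next
    fix a b assume "a \<in> conj_set G g H" "b \<in> conj_set G g H"
    then obtain h k where h: "h \<in> H" "a = g \<otimes> h \<otimes> inv g" and k: "k \<in> H" "b = g \<otimes> k \<otimes> inv g"
      using assms Hs by (auto simp: conj_set_eq)
    have hc: "h \<in> carrier G" "k \<in> carrier G" using h k Hs by auto
    have "a \<otimes> b = g \<otimes> (h \<otimes> k) \<otimes> inv g" using h k hc assms by (simp add: m_assoc)
    then show "a \<otimes> b \<in> conj_set G g H" using assms Hs h k subgroup.m_closed by (fastforce simp: conj_set_eq)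
  qed
qed

lemma conj_set_self:
  assumes "subgroup H G" "g \<in> H"
  shows "conj_set G g H = H"
proof -
  have Hs: "H \<subseteq> carrier G" using assms subgroup.subset by blast
  have gc: "g \<in> carrier G" using assms Hs by auto
  have "conj_set G g H \<subseteq> H" using assms Hs gc
    by (auto simp: conj_set_eq intro!: subgroup.m_closed subgroup.m_inv_closed)
  moreover have "finite H \<or> True" by simp
  moreover have "H \<subseteq> conj_set G g H"
  proof
    fix x assume x: "x \<in> H"
    have xc: "x \<in> carrier G" using x Hs by auto
    have "inv g \<otimes> x \<otimes> g \<in> H" using assms x by (auto intro!: subgroup.m_closed subgroup.m_inv_closed)
    then show "x \<in> conj_set G g H" using conj_set_mem[OF gc Hs xc] by simp
  qed
  ultimately show ?thesis by blast
qed

lemma normalizer_eq: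
  assumes "H \<subseteq> carrier G"
  shows "normalizer G H = {g \<in> carrier G. conj_set G g H = H}"
  using assms unfolding normalizer_def stabilizer_def conj_set_def by auto

lemma card_subgroup_dvd:
  assumes "subgroup A G" "subgroup B G" "A \<subseteq> B"
  shows "card A dvd card B"
proof -
  interpret B: group "G\<lparr>carrier := B\<rparr>" using assms subgroup_imp_group by blast
  have "subgroup A (G\<lparr>carrier := B\<rparr>)" using subgroup_incl assms by blast
  from B.lagrange[OF this] have "card (rcosets\<^bsub>G\<lparr>carrier := B\<rparr>\<^esub> A) * card A = card B"
    by (simp add: order_def)
  then show ?thesis by (metis dvd_triv_right)
qed

lemma prime_ord:
  assumes "x \<in> carrier G" "x [^] (r::nat) = \<one>" "Factorial_Ring.prime r" "x \<noteq> \<one>"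
  shows "ord x = r"
proof -
  have "ord x dvd r" using assms pow_eq_id by blast
  moreover have "ord x \<noteq> 1" using assms ord_eq_1 by blast
  ultimately show ?thesis using prime_dvd_cases[OF assms(3)] by blast
qed

lemma gen_card:
  assumes "x \<in> carrier G" "x [^] (r::nat) = \<one>" "Factorial_Ring.prime r" "x \<noteq> \<one>"
  shows "card (generate G {x}) = r"
  using prime_ord[OF assms] generate_pow_card[OF assms(1)] by simp

lemma gen_eq:
  assumes "x \<in> carrier G" "ord x \<noteq> 0"
  shows "generate G {x} = {x [^] (k::nat) | k. True}"
  using generate_pow_nat[OF assms] by simp

lemma subgroup_prime_card_eq_gen:
  assumes "subgroup H G" "card H = r" "Factorial_Ring.prime r" "x \<in> H" "x \<noteq> \<one>"
  shows "generate G {x} = H"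
proof -
  have Hs: "H \<subseteq> carrier G" using assms(1) subgroup.subset by blast
  have xc: "x \<in> carrier G" using assms(4) Hs by blast
  have "r > 0" using assms(3) prime_gt_0_nat by blast
  then have fin: "finite H" using assms(2) card_ge_0_finite by metis
  have sub: "generate G {x} \<subseteq> H" using generate_subgroup_incl[of "{x}" H] assms(1,4) by blast
  have gs: "subgroup (generate G {x}) G" using generate_is_subgroup[of "{x}"] xc by blast
  have "card (generate G {x}) dvd card H" by (rule card_subgroup_dvd[OF gs assms(1) sub])
  then have d: "card (generate G {x}) dvd r" using assms(2) by simp
  have "card (generate G {x}) \<noteq> 1"
  proof
    assume "card (generate G {x}) = 1"
    then obtain a where a: "generate G {x} = {a}" using card_1_singletonE by blast
    have "x \<in> generate G {x}" by (rule generate.incl) simp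
    moreover have "\<one> \<in> generate G {x}" by (rule generate.one)
    ultimately show False using a assms(5) by (metis singletonD)
  qed
  then have "card (generate G {x}) = r" using prime_dvd_cases[OF assms(3) d] by blast
  then show ?thesis using sub fin assms(2) card_subset_eq by metis
qed

end

locale frob = group G for G (structure) +
  fixes C N :: "'a set" and p q :: nat
  assumes fin: "finite (carrier G)"
  and fc: "frobenius_complement G C"
  and pp: "Factorial_Ring.prime p" and qp: "Factorial_Ring.prime q"
  and Ndef: "N = frobenius_kernel G C"
  and ea: "elementary_abelian G N p"
  and cardN: "card N = p^2" and cardC: "card C = q"
begin

lemma fc': "subgroup C G \<and> C \<noteq> {\<one>} \<and> C \<noteq> carrier G \<and>
     (\<forall>g \<in> carrier G - C. C \<inter> conj_set G g C = {\<one>})"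
  using fc unfolding frobenius_complement_def .
lemma C_sub: "subgroup C G" using fc' by (rule conjunct1)
lemma C_ne: "C \<noteq> {\<one>}" using fc' by simp
lemma C_car: "C \<subseteq> carrier G" using C_sub subgroup.subset by blast
lemma C_frob: "g \<in> carrier G \<Longrightarrow> g \<notin> C \<Longrightarrow> C \<inter> conj_set G g C = {\<one>}"
  using fc' by simp
lemma ea': "subgroup N G \<and> (\<forall>x \<in> N. \<forall>y \<in> N. x \<otimes> y = y \<otimes> x) \<and> (\<forall>x \<in> N. x [^] p = \<one>)"
  using ea unfolding elementary_abelian_def .
lemma N_sub: "subgroup N G" using ea' by (rule conjunct1)
lemma N_car: "N \<subseteq> carrier G" using N_sub subgroup.subset by blast
lemma N_comm: "x \<in> N \<Longrightarrow> y \<in> N \<Longrightarrow> x \<otimes> y = y \<otimes> x" using ea' by simp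
lemma N_pow: "x \<in> N \<Longrightarrow> x [^] p = \<one>" using ea' by simp
lemma p2: "p \<ge> 2" using pp prime_ge_2_nat by blast
lemma q2: "q \<ge> 2" using qp prime_ge_2_nat by blast
lemma N1 [simp]: "\<one> \<in> N" using N_sub subgroup.one_closed by blast
lemma C1 [simp]: "\<one> \<in> C" using C_sub subgroup.one_closed by blast
lemma finN: "finite N" using fin N_car finite_subset by blast
lemma finC: "finite C" using fin C_car finite_subset by blast

lemma memN: "x \<in> carrier G \<Longrightarrow> x \<in> N \<longleftrightarrow> x = \<one> \<or> (\<forall>g\<in>carrier G. x \<notin> conj_set G g C)"
  unfolding Ndef frobenius_kernel_def by auto

lemma NC: "N \<inter> C = {\<one>}"
proof -
  { fix x assume x: "x \<in> N" "x \<in> C" "x \<noteq> \<one>"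
    have "x \<in> conj_set G \<one> C" using conj_set_one[OF C_car] x by simp
    then have False using memN[of x] x C_car by auto }
  then show ?thesis by auto
qed

lemma N_normal:
  assumes g: "g \<in> carrier G" and x: "x \<in> N"
  shows "g \<otimes> x \<otimes> inv g \<in> N"
proof -
  have xc: "x \<in> carrier G" using x N_car by auto
  have yc: "g \<otimes> x \<otimes> inv g \<in> carrier G" using g xc by auto
  show ?thesis
  proof (cases "x = \<one>")
    case True then show ?thesis using g by simp
  next
    case False
    have "g \<otimes> x \<otimes> inv g \<noteq> \<one>"
    proof
      assume "g \<otimes> x \<otimes> inv g = \<one>"
      then have "inv g \<otimes> (g \<otimes> x \<otimes> inv g) \<otimes> g = \<one>" using g by (simp add: m_assoc)
      then show False using False g xc by (simp add: m_assoc)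
    qed
    moreover have "\<forall>h\<in>carrier G. g \<otimes> x \<otimes> inv g \<notin> conj_set G h C"
    proof (intro ballI notI)
      fix h assume h: "h \<in> carrier G" and m: "g \<otimes> x \<otimes> inv g \<in> conj_set G h C"
      have "x \<in> conj_set G (inv g) (conj_set G h C)"
        using m conj_set_mem[OF inv_closed[OF g] conj_set_sub[OF h C_car] xc] g xc
        by (simp add: m_assoc)
      then have "x \<in> conj_set G (inv g \<otimes> h) C" using conj_set_comp g h C_car by auto
      then show False using memN[OF xc] x False g h by auto
    qed
    ultimately show ?thesis using memN[OF yc] by auto
  qed
qed

lemma fpf:
  assumes m: "m \<in> N" and c: "c \<in> C" "c \<noteq> \<one>" and comm: "c \<otimes> m = m \<otimes> c"
  shows "m = \<one>"
proof (cases "m \<in> C")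
  case True then show ?thesis using NC m by auto
next
  case False
  have mc: "m \<in> carrier G" using m N_car by auto
  have cc: "c \<in> carrier G" using c C_car by auto
  have "inv m \<otimes> c \<otimes> m = c" using comm mc cc by (simp add: m_assoc)
  then have "c \<in> conj_set G m C" using conj_set_mem[OF mc C_car cc] c by simp
  then have "c \<in> C \<inter> conj_set G m C" using c by simp
  then show ?thesis using C_frob[OF mc False] c by auto
qed

end

context frob begin

definition "Cl = {conj_set G g C | g. g \<in> carrier G}"

lemma normalizer_C: "normalizer G C = C"
proof -
  have "normalizer G C = {g \<in> carrier G. conj_set G g C = C}" by (rule normalizer_eq[OF C_car])
  also have "\<dots> = C"
  proof
    show "C \<subseteq> {g \<in> carrier G. conj_set G g C = C}" using conj_set_self[OF C_sub] C_car by blast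
    show "{g \<in> carrier G. conj_set G g C = C} \<subseteq> C"
    proof
      fix g assume g: "g \<in> {g \<in> carrier G. conj_set G g C = C}"
      show "g \<in> C"
      proof (rule ccontr)
        assume "g \<notin> C"
        then have "C \<inter> conj_set G g C = {\<one>}" using C_frob g by blast
        then show False using g C_ne by simp
      qed
    qed
  qed
  finally show ?thesis .
qed

lemma order_Cl: "order G = card Cl * q"
proof -
  interpret A: group_action G "{H. H \<subseteq> carrier G}" "\<lambda>g. \<lambda>H \<in> {H. H \<subseteq> carrier G}. g <# H #> (inv g)"
    by (rule action_by_conjugation_on_power_set)
  have o: "orbit G (\<lambda>g. \<lambda>H \<in> {H. H \<subseteq> carrier G}. g <# H #> (inv g)) C = Cl"
    unfolding orbit_def Cl_def conj_set_def using C_car by simp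
  have s: "stabilizer G (\<lambda>g. \<lambda>H \<in> {H. H \<subseteq> carrier G}. g <# H #> (inv g)) C = C"
    using normalizer_C unfolding normalizer_def .
  have "card Cl * card C = order G" using A.orbit_stabilizer_theorem[of C] C_car o s by simp
  then show ?thesis using cardC by simp
qed

lemma Cl_card: "Y \<in> Cl \<Longrightarrow> card Y = q \<and> \<one> \<in> Y \<and> Y \<subseteq> carrier G"
proof -
  assume "Y \<in> Cl"
  then obtain g where g: "g \<in> carrier G" "Y = conj_set G g C" unfolding Cl_def by blast
  have "card Y = q" using conj_set_card[OF g(1) C_car] g cardC by simp
  moreover have "\<one> \<in> Y" using subgroup.one_closed[OF conj_set_subgroup[OF g(1) C_sub]] g by simp
  moreover have "Y \<subseteq> carrier G" using conj_set_sub[OF g(1) C_car] g by simp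
  ultimately show ?thesis by blast
qed

lemma order_le: "order G \<le> p^2 * q"
proof -
  have finCl: "finite Cl" using order_Cl fin q2
    by (metis mult_eq_0_iff card.infinite order_gt_0_iff_finite not_less0 not_numeral_le_zero)
  have sub: "carrier G \<subseteq> N \<union> (\<Union>Y\<in>Cl. Y - {\<one>})"
  proof
    fix x assume x: "x \<in> carrier G"
    show "x \<in> N \<union> (\<Union>Y\<in>Cl. Y - {\<one>})"
    proof (cases "x \<in> N")
      case False
      then obtain g where g: "g \<in> carrier G" "x \<in> conj_set G g C" "x \<noteq> \<one>" using memN[OF x] by blast
      then show ?thesis unfolding Cl_def by blast
    qed simp
  qed
  have "order G \<le> card (N \<union> (\<Union>Y\<in>Cl. Y - {\<one>}))"
    unfolding order_def using sub card_mono finN finCl Cl_card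
    by (metis (no_types, lifting) finite_Diff finite_UN_I finite_Un fin finite_subset)
  also have "\<dots> \<le> card N + card (\<Union>Y\<in>Cl. Y - {\<one>})" by (rule card_Un_le)
  also have "card (\<Union>Y\<in>Cl. Y - {\<one>}) \<le> (\<Sum>Y\<in>Cl. card (Y - {\<one>}))" by (rule card_UN_le[OF finCl])
  also have "(\<Sum>Y\<in>Cl. card (Y - {\<one>})) = (\<Sum>Y\<in>Cl. q - 1)"
  proof (rule sum.cong)
    fix Y assume "Y \<in> Cl"
    then show "card (Y - {\<one>}) = q - 1" using Cl_card by (simp add: card_Diff_singleton)
  qed simp
  also have "\<dots> = card Cl * (q - 1)" by simp
  finally have le: "order G \<le> p^2 + card Cl * (q - 1)" using cardN by simp
  have "card Cl * q \<le> p^2 + card Cl * (q - 1)" using le order_Cl by simp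
  then have a: "q * card Cl \<le> p^2 + q * card Cl - card Cl" using q2 by (simp add: algebra_simps diff_mult_distrib2)
  have b: "card Cl \<le> q * card Cl" using q2 by simp
  from a b have "card Cl \<le> p^2" by linarith
  then show ?thesis using order_Cl by simp
qed

lemma NC_inj: "inj_on (\<lambda>(n, c). n \<otimes> c) (N \<times> C)"
proof (rule inj_onI)
  fix x y assume x: "x \<in> N \<times> C" and y: "y \<in> N \<times> C"
    and e0: "(\<lambda>(n, c). n \<otimes> c) x = (\<lambda>(n, c). n \<otimes> c) y"
  obtain n c where xnc: "x = (n, c)" by (cases x)
  obtain n' c' where ync: "y = (n', c')" by (cases y)
  have a: "n \<in> N" "c \<in> C" "n' \<in> N" "c' \<in> C" using x y xnc ync by auto
  have a5: "n \<otimes> c = n' \<otimes> c'" using e0 xnc ync by simp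
  have nc: "n \<in> carrier G" "n' \<in> carrier G" "c \<in> carrier G" "c' \<in> carrier G" using a N_car C_car by auto
  have "inv n' \<otimes> (n \<otimes> c) \<otimes> inv c = inv n' \<otimes> (n' \<otimes> c') \<otimes> inv c" using a5 by simp
  then have e: "inv n' \<otimes> n = c' \<otimes> inv c" using nc by (simp add: m_assoc)
  have "inv n' \<otimes> n \<in> N" using a N_sub by (simp add: subgroup.m_closed subgroup.m_inv_closed)
  moreover have "c' \<otimes> inv c \<in> C" using a C_sub by (simp add: subgroup.m_closed subgroup.m_inv_closed)
  ultimately have "inv n' \<otimes> n = \<one>" using e NC by auto
  then have "n' \<otimes> (inv n' \<otimes> n) = n'" using nc by simp
  then have nn: "n = n'" using nc by simp
  then have "c = c'" using a5 nc by simp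
  then show "x = y" using nn xnc ync by simp
qed

lemma NC_eq: "(\<lambda>(n, c). n \<otimes> c) ` (N \<times> C) = carrier G"
proof (rule card_subset_eq[OF fin])
  show "(\<lambda>(n, c). n \<otimes> c) ` (N \<times> C) \<subseteq> carrier G" using N_car C_car by auto
  have "card ((\<lambda>(n, c). n \<otimes> c) ` (N \<times> C)) = p^2 * q"
    using card_image[OF NC_inj] by (simp add: card_cartesian_product cardN cardC)
  then show "card ((\<lambda>(n, c). n \<otimes> c) ` (N \<times> C)) = card (carrier G)"
    using order_le card_mono[OF fin \<open>(\<lambda>(n, c). n \<otimes> c) ` (N \<times> C) \<subseteq> carrier G\<close>]
    unfolding order_def by simp
qed

lemma order_eq: "order G = p^2 * q"
  using NC_eq card_image[OF NC_inj] cardN cardC card_cartesian_product unfolding order_def by metis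

lemma decomp: assumes g: "g \<in> carrier G" shows "\<exists>n\<in>N. \<exists>c\<in>C. g = n \<otimes> c"
proof -
  have "g \<in> (\<lambda>(n, c). n \<otimes> c) ` (N \<times> C)" using NC_eq g by simp
  then obtain x where x: "x \<in> N \<times> C" "g = (\<lambda>(n, c). n \<otimes> c) x" by blast
  obtain n c where nc: "x = (n, c)" by (cases x)
  have "n \<in> N" "c \<in> C" using x(1) nc by auto
  moreover have "g = n \<otimes> c" using x(2) nc by simp
  ultimately show ?thesis by blast
qed

end

context group begin

lemma conj_pow:
  assumes "c \<in> carrier G" "x \<in> carrier G"
  shows "c \<otimes> x [^] (k::nat) \<otimes> inv c = (c \<otimes> x \<otimes> inv c) [^] k"
proof (induction k)
  case 0 then show ?case using assms by simp
next
  case (Suc k)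
  have "c \<otimes> x [^] Suc k \<otimes> inv c = (c \<otimes> x [^] k \<otimes> inv c) \<otimes> (c \<otimes> x \<otimes> inv c)"
    using assms by (simp add: m_assoc)
  then show ?case using Suc by simp
qed

lemma gen_mem: "x \<in> carrier G \<Longrightarrow> x \<in> generate G {x}"
  by (rule generate.incl) simp

end

context frob begin

lemma conj_frob:
  assumes g: "g \<in> carrier G"
  shows "frob G (conj_set G g C) N p q"
proof -
  define C' where "C' = conj_set G g C"
  have C'sub: "subgroup C' G" unfolding C'_def by (rule conj_set_subgroup[OF g C_sub])
  have C'car: "C' \<subseteq> carrier G" using C'sub subgroup.subset by blast
  have cardC': "card C' = q" unfolding C'_def using conj_set_card[OF g C_car] cardC by simp
  have U: "(\<Union>h\<in>carrier G. conj_set G h C') = (\<Union>k\<in>carrier G. conj_set G k C)"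
  proof
    show "(\<Union>h\<in>carrier G. conj_set G h C') \<subseteq> (\<Union>k\<in>carrier G. conj_set G k C)"
    proof
      fix x assume "x \<in> (\<Union>h\<in>carrier G. conj_set G h C')"
      then obtain h where h: "h \<in> carrier G" "x \<in> conj_set G h C'" by blast
      have "conj_set G h C' = conj_set G (h \<otimes> g) C" unfolding C'_def using conj_set_comp h g C_car by blast
      moreover have "h \<otimes> g \<in> carrier G" using h g by simp
      ultimately show "x \<in> (\<Union>k\<in>carrier G. conj_set G k C)" using h by blast
    qed
    show "(\<Union>k\<in>carrier G. conj_set G k C) \<subseteq> (\<Union>h\<in>carrier G. conj_set G h C')"
    proof
      fix x assume "x \<in> (\<Union>k\<in>carrier G. conj_set G k C)"
      then obtain k where k: "k \<in> carrier G" "x \<in> conj_set G k C" by blast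
      have "conj_set G (k \<otimes> inv g) C' = conj_set G (k \<otimes> inv g \<otimes> g) C"
        unfolding C'_def using conj_set_comp k g C_car by simp
      also have "k \<otimes> inv g \<otimes> g = k" using k g by (simp add: m_assoc)
      finally have "x \<in> conj_set G (k \<otimes> inv g) C'" using k by simp
      moreover have "k \<otimes> inv g \<in> carrier G" using k g by simp
      ultimately show "x \<in> (\<Union>h\<in>carrier G. conj_set G h C')" by blast
    qed
  qed
  have kern: "frobenius_kernel G C' = N"
    unfolding frobenius_kernel_def Ndef using U by simp
  have fr: "\<forall>h \<in> carrier G - C'. C' \<inter> conj_set G h C' = {\<one>}"
  proof
    fix h assume h: "h \<in> carrier G - C'"
    have hc: "h \<in> carrier G" using h by simp
    define k where "k = inv g \<otimes> h \<otimes> g"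
    have kc: "k \<in> carrier G" unfolding k_def using hc g by simp
    have knC: "k \<notin> C" using h conj_set_mem[OF g C_car hc] unfolding C'_def k_def by simp
    have "C' \<inter> conj_set G h C' \<subseteq> {\<one>}"
    proof
      fix x assume x: "x \<in> C' \<inter> conj_set G h C'"
      have xc: "x \<in> carrier G" using x C'car by auto
      define y where "y = inv g \<otimes> x \<otimes> g"
      have yc: "y \<in> carrier G" unfolding y_def using xc g by simp
      have yC: "y \<in> C" using x conj_set_mem[OF g C_car xc] unfolding C'_def y_def by simp
      have "x \<in> conj_set G (h \<otimes> g) C" using x conj_set_comp[OF hc g C_car] unfolding C'_def by simp
      then have "inv (h \<otimes> g) \<otimes> x \<otimes> (h \<otimes> g) \<in> C" using conj_set_mem[OF _ C_car xc] hc g by simp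
      moreover have "inv (h \<otimes> g) \<otimes> x \<otimes> (h \<otimes> g) = inv k \<otimes> y \<otimes> k"
        unfolding k_def y_def using hc g xc by (simp add: inv_mult_group m_assoc)
      ultimately have "y \<in> conj_set G k C" using conj_set_mem[OF kc C_car yc] by simp
      then have "y \<in> C \<inter> conj_set G k C" using yC by simp
      then have "y = \<one>" using C_frob[OF kc knC] by simp
      then have "g \<otimes> y \<otimes> inv g = \<one>" using g by simp
      moreover have "g \<otimes> y \<otimes> inv g = x" unfolding y_def using g xc by (simp add: m_assoc)
      ultimately show "x \<in> {\<one>}" by simp
    qed
    moreover have "\<one> \<in> C' \<inter> conj_set G h C'"
      using subgroup.one_closed[OF C'sub] subgroup.one_closed[OF conj_set_subgroup[OF hc C'sub]] by simp
    ultimately show "C' \<inter> conj_set G h C' = {\<one>}" by blast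
  qed
  have ne1: "C' \<noteq> {\<one>}" using cardC' q2 by auto
  have "card (carrier G) = p^2 * q" using order_eq unfolding order_def .
  moreover have "p^2 * q > q"
  proof -
    have "p^2 \<ge> 2^2" using p2 by (rule power_mono) simp
    then have "p^2 * q \<ge> 4 * q" by simp
    then show ?thesis using q2 by linarith
  qed
  ultimately have ne2: "C' \<noteq> carrier G" using cardC' by auto
  have "frobenius_complement G C'" unfolding frobenius_complement_def using C'sub ne1 ne2 fr by blast
  then show ?thesis unfolding C'_def[symmetric]
    apply (intro frob.intro frob_axioms.intro is_group)
    using fin pp qp ea cardN cardC' kern by simp_all
qed

definition "Lines = {P. subgroup P G \<and> P \<subseteq> N \<and> card P = p}"

lemma N_ord: "x \<in> N \<Longrightarrow> x \<noteq> \<one> \<Longrightarrow> ord x = p"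
  using prime_ord[of x p] N_pow N_car pp by blast

lemma gen_line: assumes "x \<in> N" "x \<noteq> \<one>" shows "generate G {x} \<in> Lines"
proof -
  have xc: "x \<in> carrier G" using assms N_car by blast
  have "subgroup (generate G {x}) G" using generate_is_subgroup[of "{x}"] xc by blast
  moreover have "generate G {x} \<subseteq> N" using generate_subgroup_incl[of "{x}" N] N_sub assms by blast
  moreover have "card (generate G {x}) = p" using gen_card[of x p] xc N_pow assms pp by blast
  ultimately show ?thesis unfolding Lines_def by blast
qed

lemma Lines_D: "P \<in> Lines \<Longrightarrow> subgroup P G \<and> P \<subseteq> N \<and> card P = p"
  unfolding Lines_def by blast

lemma line_eq: "P \<in> Lines \<Longrightarrow> x \<in> P \<Longrightarrow> x \<noteq> \<one> \<Longrightarrow> generate G {x} = P"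
  using subgroup_prime_card_eq_gen[of P p x] Lines_D pp by blast

lemma line_powers:
  assumes "P \<in> Lines" "x \<in> P" "x \<noteq> \<one>"
  shows "P = {x [^] (k::nat) | k. True}"
proof -
  have xN: "x \<in> N" using assms Lines_D by blast
  have xc: "x \<in> carrier G" using xN N_car by blast
  have "ord x \<noteq> 0" using N_ord[OF xN assms(3)] p2 by simp
  then show ?thesis using gen_eq[OF xc] line_eq[OF assms] by simp
qed

lemma lines_disj:
  assumes "P \<in> Lines" "Q \<in> Lines" "P \<noteq> Q"
  shows "P \<inter> Q = {\<one>}"
proof -
  have "P \<inter> Q \<subseteq> {\<one>}"
  proof
    fix x assume x: "x \<in> P \<inter> Q"
    show "x \<in> {\<one>}"
    proof (rule ccontr)
      assume "x \<notin> {\<one>}"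
      then have "x \<noteq> \<one>" by simp
      then have "P = Q" using line_eq[OF assms(1)] line_eq[OF assms(2)] x by (metis IntD1 IntD2)
      then show False using assms(3) by simp
    qed
  qed
  moreover have "\<one> \<in> P" "\<one> \<in> Q" using Lines_D assms subgroup.one_closed by blast+
  ultimately show ?thesis by blast
qed

lemma finLines: "finite Lines"
proof -
  have "Lines \<subseteq> Pow N" unfolding Lines_def by blast
  then show ?thesis using finN finite_subset by blast
qed

lemma card_Lines: "card Lines = p + 1"
proof -
  have U: "N - {\<one>} = (\<Union>P\<in>Lines. P - {\<one>})"
  proof
    show "N - {\<one>} \<subseteq> (\<Union>P\<in>Lines. P - {\<one>})"
    proof
      fix x assume x: "x \<in> N - {\<one>}"
      then have "generate G {x} \<in> Lines" using gen_line by blast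
      moreover have "x \<in> generate G {x}" using gen_mem x N_car by blast
      ultimately show "x \<in> (\<Union>P\<in>Lines. P - {\<one>})" using x by blast
    qed
    show "(\<Union>P\<in>Lines. P - {\<one>}) \<subseteq> N - {\<one>}" unfolding Lines_def by blast
  qed
  have "card (\<Union>P\<in>Lines. P - {\<one>}) = (\<Sum>P\<in>Lines. card (P - {\<one>}))"
  proof (rule card_UN_disjoint[OF finLines])
    show "\<forall>P\<in>Lines. finite (P - {\<one>})" using Lines_D finN finite_subset by blast
    show "\<forall>P\<in>Lines. \<forall>Q\<in>Lines. P \<noteq> Q \<longrightarrow> (P - {\<one>}) \<inter> (Q - {\<one>}) = {}"
      using lines_disj by blast
  qed
  also have "\<dots> = (\<Sum>P\<in>Lines. p - 1)"
  proof (rule sum.cong)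
    fix P assume P: "P \<in> Lines"
    have "\<one> \<in> P" using Lines_D[OF P] subgroup.one_closed by blast
    moreover have "finite P" using Lines_D[OF P] finN finite_subset by blast
    ultimately show "card (P - {\<one>}) = p - 1" using Lines_D[OF P] by (simp add: card_Diff_singleton)
  qed simp
  finally have e1: "card (N - {\<one>}) = card Lines * (p - 1)" using U by simp
  have "card (N - {\<one>}) = p^2 - 1" using cardN finN by (simp add: card_Diff_singleton)
  also have "\<dots> = (p + 1) * (p - 1)" using p2 by (cases p) (simp_all add: power2_eq_square)
  finally have eq: "card Lines * (p - 1) = (p + 1) * (p - 1)" using e1 by simp
  have "p - 1 \<noteq> 0" using p2 by simp
  then show ?thesis using eq mult_right_cancel by blast
qed

lemma prod_lines:
  assumes P: "P \<in> Lines" and Q: "Q \<in> Lines" and PQ: "P \<noteq> Q" and m: "m \<in> N"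
  shows "\<exists>a\<in>P. \<exists>b\<in>Q. m = a \<otimes> b"
proof -
  have Pc: "P \<subseteq> carrier G" "Q \<subseteq> carrier G" using Lines_D P Q N_car by blast+
  have inj: "inj_on (\<lambda>(a, b). a \<otimes> b) (P \<times> Q)"
  proof (rule inj_onI)
    fix x y assume x: "x \<in> P \<times> Q" and y: "y \<in> P \<times> Q"
      and e0: "(\<lambda>(a, b). a \<otimes> b) x = (\<lambda>(a, b). a \<otimes> b) y"
    obtain n c where xnc: "x = (n, c)" by (cases x)
    obtain n' c' where ync: "y = (n', c')" by (cases y)
    have a: "n \<in> P" "c \<in> Q" "n' \<in> P" "c' \<in> Q" using x y xnc ync by auto
    have a5: "n \<otimes> c = n' \<otimes> c'" using e0 xnc ync by simp
    have nc: "n \<in> carrier G" "n' \<in> carrier G" "c \<in> carrier G" "c' \<in> carrier G" using a Pc by auto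
    have "inv n' \<otimes> (n \<otimes> c) \<otimes> inv c = inv n' \<otimes> (n' \<otimes> c') \<otimes> inv c" using a5 by simp
    then have e: "inv n' \<otimes> n = c' \<otimes> inv c" using nc by (simp add: m_assoc)
    have "inv n' \<otimes> n \<in> P" using a Lines_D[OF P] by (simp add: subgroup.m_closed subgroup.m_inv_closed)
    moreover have "c' \<otimes> inv c \<in> Q" using a Lines_D[OF Q] by (simp add: subgroup.m_closed subgroup.m_inv_closed)
    ultimately have "inv n' \<otimes> n = \<one>" using e lines_disj[OF P Q PQ] by auto
    then have "n' \<otimes> (inv n' \<otimes> n) = n'" using nc by simp
    then have nn: "n = n'" using nc by simp
    then have "c = c'" using a5 nc by simp
    then show "x = y" using nn xnc ync by simp
  qed
  have sub: "(\<lambda>(a, b). a \<otimes> b) ` (P \<times> Q) \<subseteq> N"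
  proof
    fix z assume "z \<in> (\<lambda>(a, b). a \<otimes> b) ` (P \<times> Q)"
    then obtain x where x: "x \<in> P \<times> Q" "z = (\<lambda>(a, b). a \<otimes> b) x" by blast
    obtain a b where ab: "x = (a, b)" by (cases x)
    have "a \<in> N" "b \<in> N" using x ab Lines_D P Q by auto
    then show "z \<in> N" using x ab N_sub subgroup.m_closed by fastforce
  qed
  have "card ((\<lambda>(a, b). a \<otimes> b) ` (P \<times> Q)) = p * p"
    using card_image[OF inj] Lines_D[OF P] Lines_D[OF Q] by (simp add: card_cartesian_product)
  then have "(\<lambda>(a, b). a \<otimes> b) ` (P \<times> Q) = N"
    using card_subset_eq[OF finN sub] cardN by (simp add: power2_eq_square)
  then have "m \<in> (\<lambda>(a, b). a \<otimes> b) ` (P \<times> Q)" using m by simp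
  then obtain x where x: "x \<in> P \<times> Q" "m = (\<lambda>(a, b). a \<otimes> b) x" by blast
  obtain a b where ab: "x = (a, b)" by (cases x)
  have "a \<in> P" "b \<in> Q" using x ab by auto
  moreover have "m = a \<otimes> b" using x ab by simp
  ultimately show ?thesis by blast
qed

lemma conj_line:
  assumes L: "L \<in> Lines" and g: "g \<in> carrier G"
  shows "conj_set G g L \<in> Lines"
proof -
  have Ls: "subgroup L G" "L \<subseteq> N" "card L = p" using Lines_D[OF L] by auto
  have Lc: "L \<subseteq> carrier G" using Ls N_car by blast
  have "subgroup (conj_set G g L) G" by (rule conj_set_subgroup[OF g Ls(1)])
  moreover have "conj_set G g L \<subseteq> N"
  proof
    fix x assume "x \<in> conj_set G g L"
    then obtain h where h: "h \<in> L" "x = g \<otimes> h \<otimes> inv g" using conj_set_eq[OF g Lc] by blast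
    then show "x \<in> N" using N_normal[OF g] Ls by blast
  qed
  moreover have "card (conj_set G g L) = p" using conj_set_card[OF g Lc] Ls by simp
  ultimately show ?thesis unfolding Lines_def by blast
qed

lemma conj_N_triv:
  assumes n: "n \<in> N" and M: "M \<subseteq> N"
  shows "conj_set G n M = M"
proof -
  have nc: "n \<in> carrier G" using n N_car by blast
  have Mc: "M \<subseteq> carrier G" using M N_car by blast
  have "\<forall>h\<in>M. n \<otimes> h \<otimes> inv n = h"
  proof
    fix h assume h: "h \<in> M"
    have hc: "h \<in> carrier G" using h Mc by blast
    have "n \<otimes> h = h \<otimes> n" using N_comm n h M by blast
    then show "n \<otimes> h \<otimes> inv n = h" using nc hc by (simp add: m_assoc)
  qed
  then have "(\<lambda>h. n \<otimes> h \<otimes> inv n) ` M = M" by simp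
  then show ?thesis using conj_set_eq[OF nc Mc] by simp
qed

lemma conj_line_nc:
  assumes L: "L \<subseteq> N" and n: "n \<in> N" and c: "c \<in> C"
  shows "conj_set G (n \<otimes> c) L = conj_set G c L"
proof -
  have nc: "n \<in> carrier G" "c \<in> carrier G" using n c N_car C_car by auto
  have Lc: "L \<subseteq> carrier G" using L N_car by blast
  have sub: "conj_set G c L \<subseteq> N"
  proof
    fix x assume "x \<in> conj_set G c L"
    then obtain h where h: "h \<in> L" "x = c \<otimes> h \<otimes> inv c" using conj_set_eq[OF nc(2) Lc] by blast
    then show "x \<in> N" using N_normal[OF nc(2)] L by blast
  qed
  have "conj_set G (n \<otimes> c) L = conj_set G n (conj_set G c L)" using conj_set_comp[OF nc Lc] by simp
  also have "\<dots> = conj_set G c L" by (rule conj_N_triv[OF n sub])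
  finally show ?thesis .
qed

end

context group begin
lemma subgroup_pow_closed:
  assumes "subgroup K G" "x \<in> K"
  shows "x [^] (i::nat) \<in> K"
proof (induction i)
  case 0 then show ?case using assms subgroup.one_closed by simp
next
  case (Suc i)
  have "x \<in> carrier G" using subgroup.subset[OF assms(1)] assms(2) by blast
  then have "x [^] Suc i = x [^] i \<otimes> x" by simp
  then show ?case using subgroup.m_closed[OF assms(1) Suc] assms(2) by simp
qed
end

context frob begin

lemma sub_N_cases:
  assumes K: "subgroup K G" "K \<subseteq> N"
  shows "K = {\<one>} \<or> K \<in> Lines \<or> K = N"
proof -
  have "card K dvd card N" by (rule card_subgroup_dvd[OF K(1) N_sub K(2)])
  then have "card K dvd p^2" using cardN by simp
  then obtain i where i: "i \<le> 2" "card K = p^i" using divides_primepow_nat[OF pp] by blast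
  have finK: "finite K" using K finN finite_subset by blast
  have oneK: "\<one> \<in> K" using subgroup.one_closed[OF K(1)] .
  have "i = 0 \<or> i = 1 \<or> i = 2" using i by auto
  then show ?thesis
  proof (elim disjE)
    assume "i = 0"
    then have "card K = 1" using i by simp
    then obtain a where "K = {a}" using card_1_singletonE by blast
    then have "K = {\<one>}" using oneK by simp
    then show ?thesis by simp
  next
    assume "i = 1"
    then have "card K = p" using i by simp
    then show ?thesis unfolding Lines_def using K by blast
  next
    assume "i = 2"
    then have "card K = card N" using i cardN by simp
    then have "K = N" using card_subset_eq[OF finN K(2)] by simp
    then show ?thesis by simp
  qed
qed

definition psi :: "'a \<Rightarrow> 'a \<Rightarrow> 'a" where
  "psi c m = inv m \<otimes> (c \<otimes> m \<otimes> inv c)"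

lemma N_lcomm: "a \<in> N \<Longrightarrow> b \<in> N \<Longrightarrow> c \<in> N \<Longrightarrow> a \<otimes> (b \<otimes> c) = b \<otimes> (a \<otimes> c)"
proof -
  assume a: "a \<in> N" "b \<in> N" "c \<in> N"
  have ac: "a \<in> carrier G" "b \<in> carrier G" "c \<in> carrier G" using a N_car by auto
  have "a \<otimes> (b \<otimes> c) = (a \<otimes> b) \<otimes> c" using ac by (simp add: m_assoc)
  also have "\<dots> = (b \<otimes> a) \<otimes> c" by (simp only: N_comm[OF a(1) a(2)])
  also have "\<dots> = b \<otimes> (a \<otimes> c)" using ac by (simp add: m_assoc)
  finally show ?thesis .
qed

lemma N_inv: "a \<in> N \<Longrightarrow> inv a \<in> N" by (rule subgroup.m_inv_closed[OF N_sub])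
lemma N_mult: "a \<in> N \<Longrightarrow> b \<in> N \<Longrightarrow> a \<otimes> b \<in> N" by (rule subgroup.m_closed[OF N_sub])

lemma psi_N: "c \<in> carrier G \<Longrightarrow> m \<in> N \<Longrightarrow> psi c m \<in> N"
  unfolding psi_def by (rule N_mult[OF N_inv N_normal])

lemma psi_mult:
  assumes c: "c \<in> carrier G" and m: "m \<in> N" "m' \<in> N"
  shows "psi c (m \<otimes> m') = psi c m \<otimes> psi c m'"
proof -
  have mc: "m \<in> carrier G" "m' \<in> carrier G" using m N_car by auto
  define A where "A = c \<otimes> m \<otimes> inv c"
  define B where "B = c \<otimes> m' \<otimes> inv c"
  have AB: "A \<in> N" "B \<in> N" unfolding A_def B_def using N_normal c m by auto
  have I: "inv m \<in> N" "inv m' \<in> N" using m N_inv by auto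
  have e1: "c \<otimes> (m \<otimes> m') \<otimes> inv c = A \<otimes> B" unfolding A_def B_def using c mc by (simp add: m_assoc)
  have "psi c (m \<otimes> m') = (inv m' \<otimes> inv m) \<otimes> (A \<otimes> B)"
    unfolding psi_def using e1 mc by (simp add: inv_mult_group)
  also have "\<dots> = inv m' \<otimes> ((inv m \<otimes> A) \<otimes> B)"
    using I AB N_car by (simp add: m_assoc subsetD)
  also have "\<dots> = (inv m \<otimes> A) \<otimes> (inv m' \<otimes> B)"
    using N_lcomm[OF I(2) N_mult[OF I(1) AB(1)] AB(2)] .
  also have "\<dots> = psi c m \<otimes> psi c m'" unfolding psi_def A_def B_def by simp
  finally show ?thesis .
qed

lemma psi_one: "c \<in> carrier G \<Longrightarrow> psi c \<one> = \<one>"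
  unfolding psi_def by simp

lemma psi_inv:
  assumes c: "c \<in> carrier G" and m: "m \<in> N"
  shows "psi c (inv m) = inv (psi c m)"
proof -
  have mc: "m \<in> carrier G" using m N_car by auto
  have "psi c m \<otimes> psi c (inv m) = \<one>"
    using psi_mult[OF c m N_inv[OF m]] psi_one[OF c] mc by simp
  then show ?thesis using psi_N[OF c m] psi_N[OF c N_inv[OF m]] N_car
    by (metis inv_equality subsetD inv_inv)
qed

lemma psi_pow:
  assumes c: "c \<in> carrier G" and m: "m \<in> N"
  shows "psi c (m [^] (i::nat)) = psi c m [^] i"
proof (induction i)
  case 0 then show ?case using psi_one c by simp
next
  case (Suc i)
  have mc: "m \<in> carrier G" using m N_car by auto
  have "m [^] i \<in> N" using subgroup_pow_closed[OF N_sub m] by blast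
  then have "psi c (m [^] i \<otimes> m) = psi c (m [^] i) \<otimes> psi c m" using psi_mult c m by blast
  then show ?case using Suc mc by simp
qed

lemma psi_fix:
  assumes c: "c \<in> C" "c \<noteq> \<one>" and m: "m \<in> N" and e: "psi c m = \<one>"
  shows "m = \<one>"
proof -
  have cc: "c \<in> carrier G" using c C_car by auto
  have mc: "m \<in> carrier G" using m N_car by auto
  have "m \<otimes> psi c m = m" using e mc by simp
  then have "c \<otimes> m \<otimes> inv c = m" unfolding psi_def using cc mc by (simp add: m_assoc)
  then have "c \<otimes> m \<otimes> inv c \<otimes> c = m \<otimes> c" by simp
  then have "c \<otimes> m = m \<otimes> c" using cc mc by (simp add: m_assoc)
  then show ?thesis using fpf[OF m c] by simp
qed

lemma exists_c0: "\<exists>c0\<in>C. c0 \<noteq> \<one>"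
  using C_ne C1 by blast

lemma norm_self:
  assumes H: "subgroup H G" and CH: "C \<subseteq> H"
  shows "normalizer G H = H"
proof -
  have Hc: "H \<subseteq> carrier G" using subgroup.subset[OF H] by blast
  have "normalizer G H = {y \<in> carrier G. conj_set G y H = H}" by (rule normalizer_eq[OF Hc])
  also have "\<dots> = H"
  proof
    show "H \<subseteq> {y \<in> carrier G. conj_set G y H = H}" using conj_set_self[OF H] Hc by blast
    show "{y \<in> carrier G. conj_set G y H = H} \<subseteq> H"
    proof
      fix y assume y: "y \<in> {y \<in> carrier G. conj_set G y H = H}"
      then have yc: "y \<in> carrier G" and yH: "conj_set G y H = H" by auto
      obtain n c where nc: "n \<in> N" "c \<in> C" "y = n \<otimes> c" using decomp[OF yc] by blast
      have ncc: "n \<in> carrier G" "c \<in> carrier G" using nc N_car C_car by auto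
      have "conj_set G y H = conj_set G n (conj_set G c H)" using conj_set_comp[OF ncc Hc] nc by simp
      also have "conj_set G c H = H" using conj_set_self[OF H] CH nc by blast
      finally have nH: "conj_set G n H = H" using yH by simp
      have "n \<in> H"
      proof (rule ccontr)
        assume nnH: "n \<notin> H"
        obtain c0 where c0: "c0 \<in> C" "c0 \<noteq> \<one>" using exists_c0 by blast
        have c0c: "c0 \<in> carrier G" using c0 C_car by auto
        have c0H: "c0 \<in> H" using c0 CH by auto
        define K where "K = H \<inter> N"
        have Ksub: "subgroup K G" unfolding K_def using subgroups_Inter_pair[OF H N_sub] .
        have KN: "K \<subseteq> N" unfolding K_def by blast
        have n1: "n \<noteq> \<one>" using nnH subgroup.one_closed[OF H] by blast
        have "inv n \<otimes> c0 \<otimes> n \<in> H" using c0H nH conj_set_mem[OF ncc(1) Hc c0c] by simp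
        then have "inv n \<otimes> c0 \<otimes> n \<otimes> inv c0 \<in> H" using subgroup.m_closed[OF H] subgroup.m_inv_closed[OF H c0H] by blast
        moreover have "inv n \<otimes> c0 \<otimes> n \<otimes> inv c0 = psi c0 n" unfolding psi_def using ncc c0c by (simp add: m_assoc)
        ultimately have psin: "psi c0 n \<in> K" unfolding K_def using psi_N[OF c0c nc(1)] by simp
        have psiK: "psi c0 k \<in> K" if k: "k \<in> K" for k
        proof -
          have kH: "k \<in> H" and kN: "k \<in> N" using k unfolding K_def by auto
          have "inv k \<otimes> (c0 \<otimes> k \<otimes> inv c0) \<in> H" using subgroup.m_closed[OF H] subgroup.m_inv_closed[OF H] c0H kH by blast
          then show ?thesis unfolding K_def psi_def using psi_N[OF c0c kN] unfolding psi_def by simp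
        qed
        have "K = {\<one>} \<or> K \<in> Lines \<or> K = N" by (rule sub_N_cases[OF Ksub KN])
        moreover have "K \<noteq> {\<one>}"
        proof
          assume "K = {\<one>}"
          then have "psi c0 n = \<one>" using psin by simp
          then show False using psi_fix[OF c0 nc(1)] n1 by simp
        qed
        moreover have "K \<noteq> N" using nnH nc unfolding K_def by blast
        ultimately have KL: "K \<in> Lines" by simp
        define Ln where "Ln = generate G {n}"
        have LnL: "Ln \<in> Lines" unfolding Ln_def using gen_line nc n1 by blast
        have nLn: "n \<in> Ln" unfolding Ln_def using gen_mem ncc by blast
        have LnK: "Ln \<noteq> K" using nLn nnH unfolding K_def by blast
        have Lnp: "Ln = {n [^] (k::nat) | k. True}" using line_powers[OF LnL nLn n1] .
        have psiNK: "psi c0 ` N \<subseteq> K"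
        proof
          fix z assume "z \<in> psi c0 ` N"
          then obtain m where m: "m \<in> N" "z = psi c0 m" by blast
          obtain k v where kv: "k \<in> K" "v \<in> Ln" "m = k \<otimes> v" using prod_lines[OF KL LnL LnK[symmetric] m(1)] by blast
          obtain i where i: "v = n [^] (i::nat)" using kv(2) Lnp by blast
          have kN: "k \<in> N" using kv KN by blast
          have vN: "v \<in> N" using kv Lines_D[OF LnL] by blast
          have "z = psi c0 k \<otimes> psi c0 v" using m kv psi_mult[OF c0c kN vN] by simp
          also have "psi c0 v = psi c0 n [^] i" using i psi_pow[OF c0c nc(1)] by simp
          finally have "z = psi c0 k \<otimes> psi c0 n [^] i" .
          moreover have "psi c0 k \<in> K" using psiK kv by blast
          moreover have "psi c0 n [^] i \<in> K" using subgroup_pow_closed[OF Ksub psin] by blast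
          ultimately show "z \<in> K" using subgroup.m_closed[OF Ksub] by blast
        qed
        have "\<not> inj_on (psi c0) N"
        proof
          assume inj: "inj_on (psi c0) N"
          have finK: "finite K" using KN finN finite_subset by blast
          have "card N \<le> card K" using card_image[OF inj] card_mono[OF finK psiNK] by simp
          then have "p^2 \<le> p" using cardN Lines_D[OF KL] by simp
          moreover have "p < p^2" using p2 by (simp add: power2_eq_square)
          ultimately show False by simp
        qed
        then obtain m m' where mm: "m \<in> N" "m' \<in> N" "m \<noteq> m'" "psi c0 m = psi c0 m'"
          unfolding inj_on_def by blast
        define w where "w = m' \<otimes> inv m"
        have mmc: "m \<in> carrier G" "m' \<in> carrier G" using mm N_car by auto
        have wN: "w \<in> N" unfolding w_def using mm N_mult N_inv by blast
        have "psi c0 w = psi c0 m' \<otimes> inv (psi c0 m)"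
          unfolding w_def using psi_mult[OF c0c mm(2) N_inv[OF mm(1)]] psi_inv[OF c0c mm(1)] by simp
        also have "\<dots> = \<one>" using mm(4) psi_N[OF c0c mm(2)] N_car by (simp add: subsetD)
        finally have "w = \<one>" using psi_fix[OF c0 wN] by simp
        then have "m' \<otimes> inv m \<otimes> m = m" unfolding w_def using mmc by simp
        then have "m' = m" using mmc by (simp add: m_assoc)
        then show False using mm(3) by simp
      qed
      then show "y \<in> H" using subgroup.m_closed[OF H] nc CH by blast
    qed
  qed
  finally show ?thesis .
qed

end

lemma (in frob) H_in_N:
  assumes H: "subgroup H G" and nH: "normalizer G H \<noteq> H"
  shows "H \<subseteq> N"
proof (rule ccontr)
  assume "\<not> H \<subseteq> N"
  then obtain x where x: "x \<in> H" "x \<notin> N" by blast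
  have xc: "x \<in> carrier G" using x subgroup.subset[OF H] by blast
  obtain g where g: "g \<in> carrier G" "x \<in> conj_set G g C" and x1: "x \<noteq> \<one>" using memN[OF xc] x by blast
  interpret F: frob G "conj_set G g C" N p q by (rule conj_frob[OF g(1)])
  have "generate G {x} = conj_set G g C"
    using subgroup_prime_card_eq_gen[OF F.C_sub F.cardC qp g(2) x1] .
  moreover have "generate G {x} \<subseteq> H" using generate_subgroup_incl[of "{x}" H] H x by blast
  ultimately have "conj_set G g C \<subseteq> H" by simp
  then have "normalizer G H = H" using F.norm_self[OF H] by blast
  then show False using nH by simp
qed

context frob begin

lemma N_not_line: "N \<notin> Lines"
proof
  assume "N \<in> Lines"
  then have "p^2 = p" using Lines_D cardN by simp
  moreover have "p < p^2" using p2 by (simp add: power2_eq_square)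
  ultimately show False by simp
qed

lemma D_sub_eq: "D_subgroups G = insert N Lines"
proof
  show "D_subgroups G \<subseteq> insert N Lines"
  proof
    fix H assume "H \<in> D_subgroups G"
    then have H: "subgroup H G" "H \<noteq> {\<one>}" "normalizer G H \<noteq> H" unfolding D_subgroups_def by auto
    have "H \<subseteq> N" by (rule H_in_N[OF H(1) H(3)])
    then show "H \<in> insert N Lines" using sub_N_cases[OF H(1)] H(2) by blast
  qed
  show "insert N Lines \<subseteq> D_subgroups G"
  proof
    fix H assume "H \<in> insert N Lines"
    then show "H \<in> D_subgroups G"
    proof
      assume HN: "H = N"
      have "N \<noteq> {\<one>}" using cardN p2 by (auto simp: power2_eq_square)
      moreover have "normalizer G N \<noteq> N"
      proof
        assume e: "normalizer G N = N"
        obtain c0 where c0: "c0 \<in> C" "c0 \<noteq> \<one>" using exists_c0 by blast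
        have c0c: "c0 \<in> carrier G" using c0 C_car by auto
        have s: "conj_set G c0 N \<subseteq> N"
        proof
          fix x assume "x \<in> conj_set G c0 N"
          then obtain h where "h \<in> N" "x = c0 \<otimes> h \<otimes> inv c0" using conj_set_eq[OF c0c N_car] by blast
          then show "x \<in> N" using N_normal[OF c0c] by blast
        qed
        have "card (conj_set G c0 N) = card N" by (rule conj_set_card[OF c0c N_car])
        then have "conj_set G c0 N = N" using card_subset_eq[OF finN s] by simp
        then have "c0 \<in> normalizer G N" using normalizer_eq[OF N_car] c0c by simp
        then have "c0 \<in> N" using e by simp
        then show False using NC c0 by blast
      qed
      ultimately show ?thesis unfolding D_subgroups_def using HN N_sub by blast
    next
      assume HL: "H \<in> Lines"
      have Hs: "subgroup H G" "H \<subseteq> N" "card H = p" using Lines_D[OF HL] by auto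
      have "H \<noteq> {\<one>}" using Hs p2 by auto
      moreover have "normalizer G H \<noteq> H"
      proof
        assume e: "normalizer G H = H"
        have "N \<subseteq> normalizer G H"
        proof
          fix n assume n: "n \<in> N"
          then have "conj_set G n H = H" using conj_N_triv Hs by blast
          then show "n \<in> normalizer G H" using normalizer_eq Hs N_car n by auto
        qed
        then have "N \<subseteq> H" using e by simp
        then have "N = H" using Hs by blast
        then show False using HL N_not_line by simp
      qed
      ultimately show ?thesis unfolding D_subgroups_def using Hs by blast
    qed
  qed
qed

end

context frob begin

definition orb :: "'a set \<Rightarrow> 'a set set" where "orb L = {conj_set G c L | c. c \<in> C}"

definition Fix where "Fix = {L \<in> Lines. \<forall>c\<in>C. conj_set G c L = L}"

lemma Lines_car: "L \<in> Lines \<Longrightarrow> L \<subseteq> carrier G"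
  using Lines_D N_car by blast

lemma conj_class_line:
  assumes L: "L \<in> Lines"
  shows "conj_class G L = orb L"
proof
  have Ln: "L \<subseteq> N" using Lines_D[OF L] by blast
  show "conj_class G L \<subseteq> orb L"
  proof
    fix x assume "x \<in> conj_class G L"
    then obtain g where g: "g \<in> carrier G" "x = conj_set G g L" unfolding conj_class_def by blast
    obtain n c where nc: "n \<in> N" "c \<in> C" "g = n \<otimes> c" using decomp[OF g(1)] by blast
    have "x = conj_set G c L" using g nc conj_line_nc[OF Ln nc(1) nc(2)] by simp
    then show "x \<in> orb L" unfolding orb_def using nc(2) by blast
  qed
  show "orb L \<subseteq> conj_class G L" unfolding orb_def conj_class_def using C_car by blast
qed

lemma orb_sub: "L \<in> Lines \<Longrightarrow> orb L \<subseteq> Lines"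
  unfolding orb_def using conj_line C_car by blast

lemma orb_self: "L \<in> Lines \<Longrightarrow> L \<in> orb L"
  unfolding orb_def using conj_set_one[OF Lines_car] C1 by (metis (mono_tags, lifting) mem_Collect_eq)

lemma orb_fix: "L \<in> Fix \<Longrightarrow> orb L = {L}"
  unfolding orb_def Fix_def using C1 by blast

lemma C_gen: "c \<in> C \<Longrightarrow> c \<noteq> \<one> \<Longrightarrow> generate G {c} = C"
  using subgroup_prime_card_eq_gen[OF C_sub cardC qp] by blast

lemma ordC: assumes "c \<in> C" "c \<noteq> \<one>" shows "ord c = q"
proof -
  have cc: "c \<in> carrier G" using assms C_car by blast
  show ?thesis using generate_pow_card[OF cc] C_gen[OF assms] cardC by simp
qed

lemma C_pow: assumes "c \<in> C" "c \<noteq> \<one>" shows "C = {c [^] (k::nat) | k. True}"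
proof -
  have cc: "c \<in> carrier G" using assms C_car by blast
  have "ord c \<noteq> 0" using ordC[OF assms] q2 by simp
  then show ?thesis using gen_eq[OF cc] C_gen[OF assms] by simp
qed

lemma fix_one_all:
  assumes L: "L \<in> Lines" and c: "c \<in> C" "c \<noteq> \<one>" and e: "conj_set G c L = L"
  shows "L \<in> Fix"
proof -
  have cc: "c \<in> carrier G" using c C_car by blast
  have Lc: "L \<subseteq> carrier G" using Lines_car[OF L] .
  have k: "conj_set G (c [^] (k::nat)) L = L" for k
  proof (induction k)
    case 0 then show ?case using conj_set_one[OF Lc] by simp
  next
    case (Suc k)
    have "conj_set G (c [^] Suc k) L = conj_set G (c [^] k \<otimes> c) L" by simp
    also have "\<dots> = conj_set G (c [^] k) (conj_set G c L)" using conj_set_comp[of "c [^] k" c L] cc Lc by simp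
    also have "\<dots> = L" using e Suc by simp
    finally show ?case .
  qed
  have "\<forall>c'\<in>C. conj_set G c' L = L"
  proof
    fix c' assume "c' \<in> C"
    then obtain k where "c' = c [^] (k::nat)" using C_pow[OF c] by blast
    then show "conj_set G c' L = L" using k by simp
  qed
  then show ?thesis unfolding Fix_def using L by blast
qed

lemma orb_card_nonfix:
  assumes L: "L \<in> Lines" and nF: "L \<notin> Fix"
  shows "card (orb L) = q"
proof -
  have Lc: "L \<subseteq> carrier G" using Lines_car[OF L] .
  have o: "orb L = (\<lambda>c. conj_set G c L) ` C" unfolding orb_def by blast
  have "inj_on (\<lambda>c. conj_set G c L) C"
  proof (rule inj_onI)
    fix c1 c2 assume c: "c1 \<in> C" "c2 \<in> C" and e: "conj_set G c1 L = conj_set G c2 L"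
    have cc: "c1 \<in> carrier G" "c2 \<in> carrier G" using c C_car by auto
    define d where "d = inv c2 \<otimes> c1"
    have dC: "d \<in> C" unfolding d_def using c subgroup.m_closed[OF C_sub] subgroup.m_inv_closed[OF C_sub] by blast
    have "conj_set G d L = conj_set G (inv c2) (conj_set G c1 L)"
      unfolding d_def using conj_set_comp[of "inv c2" c1 L] cc Lc by simp
    also have "\<dots> = conj_set G (inv c2) (conj_set G c2 L)" using e by simp
    also have "\<dots> = conj_set G (inv c2 \<otimes> c2) L" using conj_set_comp[of "inv c2" c2 L] cc Lc by simp
    also have "\<dots> = L" using cc conj_set_one[OF Lc] by simp
    finally have ed: "conj_set G d L = L" .
    have "d = \<one>"
    proof (rule ccontr)
      assume "d \<noteq> \<one>"
      then have "L \<in> Fix" using fix_one_all[OF L dC _ ed] by simp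
      then show False using nF by simp
    qed
    then have "c2 \<otimes> d = c2" using cc by simp
    then show "c1 = c2" unfolding d_def using cc by simp
  qed
  then show ?thesis using o card_image cardC by metis
qed

lemma orb_eq:
  assumes L: "L \<in> Lines" and L': "L' \<in> orb L"
  shows "orb L' = orb L"
proof -
  have Lc: "L \<subseteq> carrier G" using Lines_car[OF L] .
  obtain c where c: "c \<in> C" "L' = conj_set G c L" using L' unfolding orb_def by blast
  have cc: "c \<in> carrier G" using c C_car by blast
  show ?thesis
  proof
    show "orb L' \<subseteq> orb L"
    proof
      fix Z assume "Z \<in> orb L'"
      then obtain d where d: "d \<in> C" "Z = conj_set G d L'" unfolding orb_def by blast
      have dc: "d \<in> carrier G" using d C_car by blast
      have "Z = conj_set G (d \<otimes> c) L" using d c conj_set_comp[OF dc cc Lc] by simp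
      moreover have "d \<otimes> c \<in> C" using d c subgroup.m_closed[OF C_sub] by blast
      ultimately show "Z \<in> orb L" unfolding orb_def by blast
    qed
    show "orb L \<subseteq> orb L'"
    proof
      fix Z assume "Z \<in> orb L"
      then obtain e where e: "e \<in> C" "Z = conj_set G e L" unfolding orb_def by blast
      have ec: "e \<in> carrier G" using e C_car by blast
      have "conj_set G (e \<otimes> inv c) L' = conj_set G (e \<otimes> inv c \<otimes> c) L"
        using c conj_set_comp[of "e \<otimes> inv c" c L] ec cc Lc by simp
      also have "e \<otimes> inv c \<otimes> c = e" using ec cc by (simp add: m_assoc)
      finally have "Z = conj_set G (e \<otimes> inv c) L'" using e by simp
      moreover have "e \<otimes> inv c \<in> C" using e c subgroup.m_closed[OF C_sub] subgroup.m_inv_closed[OF C_sub] by blast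
      ultimately show "Z \<in> orb L'" unfolding orb_def by blast
    qed
  qed
qed

lemma orb_nonfix_sub:
  assumes L: "L \<in> Lines" and nF: "L \<notin> Fix"
  shows "orb L \<subseteq> Lines - Fix"
proof
  fix L' assume L': "L' \<in> orb L"
  have "L' \<in> Lines" using orb_sub[OF L] L' by blast
  moreover have "L' \<notin> Fix"
  proof
    assume "L' \<in> Fix"
    then have "orb L' = {L'}" by (rule orb_fix)
    then have "card (orb L) = 1" using orb_eq[OF L L'] by simp
    then show False using orb_card_nonfix[OF L nF] q2 by simp
  qed
  ultimately show "L' \<in> Lines - Fix" by blast
qed

lemma Fix_sub: "Fix \<subseteq> Lines" unfolding Fix_def by blast

lemma count1: "card (orb ` Lines) = card Fix + card (orb ` (Lines - Fix))"
proof -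
  have U: "orb ` Lines = orb ` Fix \<union> orb ` (Lines - Fix)" using Fix_sub by blast
  have fin1: "finite (orb ` Fix)" using finLines Fix_sub finite_subset by blast
  have fin2: "finite (orb ` (Lines - Fix))" using finLines by blast
  have disj: "orb ` Fix \<inter> orb ` (Lines - Fix) = {}"
  proof (rule ccontr)
    assume "orb ` Fix \<inter> orb ` (Lines - Fix) \<noteq> {}"
    then obtain L1 L2 where L: "L1 \<in> Fix" "L2 \<in> Lines - Fix" "orb L1 = orb L2" by blast
    have "card (orb L1) = 1" using orb_fix[OF L(1)] by simp
    moreover have "card (orb L2) = q" using orb_card_nonfix L(2) by blast
    ultimately show False using L(3) q2 by simp
  qed
  have "inj_on orb Fix" using orb_fix by (metis inj_onI singleton_inject)
  then have "card (orb ` Fix) = card Fix" by (rule card_image)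
  then show ?thesis using U card_Un_disjoint[OF fin1 fin2 disj] by simp
qed

lemma count2: "card (Lines - Fix) = q * card (orb ` (Lines - Fix))"
proof -
  have U: "Lines - Fix = \<Union> (orb ` (Lines - Fix))"
  proof
    show "Lines - Fix \<subseteq> \<Union> (orb ` (Lines - Fix))" using orb_self by blast
    show "\<Union> (orb ` (Lines - Fix)) \<subseteq> Lines - Fix" using orb_nonfix_sub by blast
  qed
  have pw: "pairwise disjnt (orb ` (Lines - Fix))"
  proof (rule pairwiseI)
    fix O1 O2 assume O: "O1 \<in> orb ` (Lines - Fix)" "O2 \<in> orb ` (Lines - Fix)" "O1 \<noteq> O2"
    obtain L1 where L1: "L1 \<in> Lines - Fix" "O1 = orb L1" using O(1) by blast
    obtain L2 where L2: "L2 \<in> Lines - Fix" "O2 = orb L2" using O(2) by blast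
    show "disjnt O1 O2"
    proof (rule ccontr)
      assume "\<not> disjnt O1 O2"
      then obtain Z where Z: "Z \<in> orb L1" "Z \<in> orb L2" unfolding disjnt_def using L1 L2 by blast
      have "orb Z = orb L1" using orb_eq L1 Z by blast
      moreover have "orb Z = orb L2" using orb_eq L2 Z by blast
      ultimately show False using O(3) L1 L2 by simp
    qed
  qed
  have fin: "\<And>A. A \<in> orb ` (Lines - Fix) \<Longrightarrow> finite A"
    using orb_sub finLines finite_subset by blast
  have "card (Lines - Fix) = sum card (orb ` (Lines - Fix))"
    using U card_Union_disjoint[OF pw fin] by simp
  also have "\<dots> = sum (\<lambda>_. q) (orb ` (Lines - Fix))"
  proof (rule sum.cong)
    fix A assume "A \<in> orb ` (Lines - Fix)"
    then obtain L where "L \<in> Lines - Fix" "A = orb L" by blast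
    then show "card A = q" using orb_card_nonfix by blast
  qed simp
  also have "\<dots> = q * card (orb ` (Lines - Fix))" by simp
  finally show ?thesis .
qed

lemma conj_class_N: "conj_class G N = {N}"
proof -
  have "conj_set G g N = N" if g: "g \<in> carrier G" for g
  proof -
    have s: "conj_set G g N \<subseteq> N"
    proof
      fix x assume "x \<in> conj_set G g N"
      then obtain h where "h \<in> N" "x = g \<otimes> h \<otimes> inv g" using conj_set_eq[OF g N_car] by blast
      then show "x \<in> N" using N_normal[OF g] by blast
    qed
    have "card (conj_set G g N) = card N" by (rule conj_set_card[OF g N_car])
    then show ?thesis using card_subset_eq[OF finN s] by simp
  qed
  then show ?thesis unfolding conj_class_def by auto
qed

lemma D_count_eq: "D_count G = card (orb ` Lines) + 1"
proof -
  have "conj_class G ` D_subgroups G = insert (conj_class G N) (conj_class G ` Lines)"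
    using D_sub_eq by simp
  also have "conj_class G ` Lines = orb ` Lines" using conj_class_line by simp
  finally have e: "conj_class G ` D_subgroups G = insert {N} (orb ` Lines)" using conj_class_N by simp
  have "{N} \<notin> orb ` Lines"
  proof
    assume "{N} \<in> orb ` Lines"
    then obtain L where L: "L \<in> Lines" "{N} = orb L" by blast
    then have "L = N" using orb_self[OF L(1)] by (metis singletonD)
    then show False using L N_not_line by simp
  qed
  moreover have "finite (orb ` Lines)" using finLines by simp
  ultimately show ?thesis unfolding D_count_def using e by simp
qed

end

lemma nt_aux:
  fixes p q a :: nat
  assumes "Factorial_Ring.prime p" "Factorial_Ring.prime q" "[a^q = 1] (mod p)" "\<not> [a = 1] (mod p)"
  shows "q dvd p - 1"
proof -
  have "ord p a dvd q" using assms(3) ord_divides by blast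
  moreover have "ord p a \<noteq> 1" using assms(4) ord_divides[of a 1 p] by auto
  ultimately have o: "ord p a = q" using prime_dvd_cases[OF assms(2)] by blast
  have "\<not> p dvd a"
  proof
    assume "p dvd a"
    then have "p dvd a^q" using assms(2) prime_gt_0_nat by (meson dvd_power dvd_trans)
    then have "[a^q = 0] (mod p)" by (simp add: cong_0_iff)
    with assms(3) have "[0 = 1] (mod p)" by (metis cong_sym cong_trans)
    then show False using assms(1) by (simp add: cong_def prime_gt_1_nat)
  qed
  then have "[a^(p-1) = 1] (mod p)" using fermat_theorem assms(1) by blast
  then show ?thesis using o ord_divides by blast
qed

lemma card_ge3:
  assumes "finite S" "card S \<ge> 3"
  shows "\<exists>a b c. a \<in> S \<and> b \<in> S \<and> c \<in> S \<and> a \<noteq> b \<and> a \<noteq> c \<and> b \<noteq> c"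
proof -
  have "S \<noteq> {}" using assms by auto
  then obtain a where a: "a \<in> S" by blast
  have "card (S - {a}) \<ge> 2" using assms a by (simp add: card_Diff_singleton)
  then have "S - {a} \<noteq> {}" by (metis card.empty not_numeral_le_zero)
  then obtain b where b: "b \<in> S - {a}" by blast
  have "card (S - {a} - {b}) \<ge> 1" using assms a b \<open>card (S - {a}) \<ge> 2\<close> by (simp add: card_Diff_singleton)
  then have "S - {a} - {b} \<noteq> {}" by (metis card.empty not_one_le_zero)
  then obtain c where c: "c \<in> S - {a} - {b}" by blast
  show ?thesis using a b c by blast
qed

context group begin
lemma pow_cong:
  assumes x: "x \<in> carrier G"
  shows "x [^] (m::nat) = x [^] (n::nat) \<longleftrightarrow> [m = n] (mod ord x)"
proof -
  have "x [^] m = x [^] n \<longleftrightarrow> x [^] (int m) = x [^] (int n)" by (simp add: int_pow_int)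
  also have "\<dots> \<longleftrightarrow> int (ord x) dvd (int n - int m)" by (rule int_pow_eq[OF x])
  also have "\<dots> \<longleftrightarrow> [int n = int m] (mod int (ord x))" by (simp add: cong_iff_dvd_diff)
  also have "\<dots> \<longleftrightarrow> [n = m] (mod ord x)" by (rule cong_int_iff)
  also have "\<dots> \<longleftrightarrow> [m = n] (mod ord x)" by (rule cong_sym_eq)
  finally show ?thesis .
qed
end

context frob begin

lemma line_nontriv: assumes "L \<in> Lines" shows "\<exists>x\<in>L. x \<noteq> \<one>"
proof (rule ccontr)
  assume "\<not> (\<exists>x\<in>L. x \<noteq> \<one>)"
  then have "L \<subseteq> {\<one>}" by blast
  then have "card L \<le> 1" using card_mono[of "{\<one>}" L] by simp
  then show False using Lines_D[OF assms] p2 by simp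
qed

lemma fix_exp:
  assumes L: "L \<in> Fix" and c: "c \<in> C"
  shows "\<exists>a::nat. \<forall>u\<in>L. c \<otimes> u \<otimes> inv c = u [^] a"
proof -
  have LL: "L \<in> Lines" using L Fix_sub by blast
  obtain x where x: "x \<in> L" "x \<noteq> \<one>" using line_nontriv[OF LL] by blast
  have cc: "c \<in> carrier G" using c C_car by blast
  have Lc: "L \<subseteq> carrier G" using Lines_car[OF LL] .
  have xc: "x \<in> carrier G" using x Lc by blast
  have Lp: "L = {x [^] (k::nat) | k. True}" using line_powers[OF LL x] .
  have "conj_set G c L = L" using L c unfolding Fix_def by blast
  moreover have "c \<otimes> x \<otimes> inv c \<in> conj_set G c L" using conj_set_eq[OF cc Lc] x by blast
  ultimately have "c \<otimes> x \<otimes> inv c \<in> L" by simp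
  then obtain a where a: "c \<otimes> x \<otimes> inv c = x [^] (a::nat)" using Lp by blast
  have "\<forall>u\<in>L. c \<otimes> u \<otimes> inv c = u [^] a"
  proof
    fix u assume "u \<in> L"
    then obtain k where k: "u = x [^] (k::nat)" using Lp by blast
    have "c \<otimes> u \<otimes> inv c = (x [^] a) [^] k" using k conj_pow[OF cc xc] a by simp
    also have "\<dots> = x [^] (a * k)" using xc by (simp add: nat_pow_pow)
    also have "\<dots> = (x [^] k) [^] a" using xc by (simp add: nat_pow_pow mult.commute)
    finally show "c \<otimes> u \<otimes> inv c = u [^] a" using k by simp
  qed
  then show ?thesis by blast
qed

lemma no_fix:
  assumes nd: "\<not> q dvd p - 1"
  shows "Fix = {}"
proof (rule ccontr)
  assume "Fix \<noteq> {}"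
  then obtain L where L: "L \<in> Fix" by blast
  have LL: "L \<in> Lines" using L Fix_sub by blast
  obtain c0 where c0: "c0 \<in> C" "c0 \<noteq> \<one>" using exists_c0 by blast
  have c0c: "c0 \<in> carrier G" using c0 C_car by blast
  obtain x where x: "x \<in> L" "x \<noteq> \<one>" using line_nontriv[OF LL] by blast
  have xN: "x \<in> N" using x Lines_D[OF LL] by blast
  have xc: "x \<in> carrier G" using xN N_car by blast
  obtain a where a: "\<forall>u\<in>L. c0 \<otimes> u \<otimes> inv c0 = u [^] (a::nat)" using fix_exp[OF L c0(1)] by blast
  have xa: "c0 \<otimes> x \<otimes> inv c0 = x [^] a" using a x by blast
  have oc: "c0 [^] q = \<one>" using ordC[OF c0] pow_ord_eq_1[OF c0c] by simp
  have it: "c0 [^] i \<otimes> x \<otimes> inv (c0 [^] i) = x [^] (a ^ i)" for i :: nat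
  proof (induction i)
    case 0 then show ?case using xc by simp
  next
    case (Suc i)
    have ci: "c0 [^] i \<in> carrier G" using c0c by simp
    have "c0 [^] Suc i \<otimes> x \<otimes> inv (c0 [^] Suc i) = c0 [^] i \<otimes> (c0 \<otimes> x \<otimes> inv c0) \<otimes> inv (c0 [^] i)"
      using ci c0c xc by (simp add: inv_mult_group m_assoc)
    also have "\<dots> = c0 [^] i \<otimes> x [^] a \<otimes> inv (c0 [^] i)" using xa by simp
    also have "\<dots> = (c0 [^] i \<otimes> x \<otimes> inv (c0 [^] i)) [^] a" using conj_pow[OF ci xc] by simp
    also have "\<dots> = x [^] (a ^ i * a)" using Suc xc by (simp add: nat_pow_pow)
    finally show ?case by (simp add: mult.commute)
  qed
  have "x [^] (a ^ q) = \<one> \<otimes> x \<otimes> inv \<one>" using it[of q] oc by simp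
  also have "\<dots> = x [^] (1::nat)" using xc by simp
  finally have "x [^] (a ^ q) = x [^] (1::nat)" .
  then have "[a ^ q = 1] (mod ord x)" using pow_cong[OF xc] by blast
  then have c1: "[a ^ q = 1] (mod p)" using N_ord[OF xN x(2)] by simp
  have c2: "\<not> [a = 1] (mod p)"
  proof
    assume "[a = 1] (mod p)"
    then have "[a = 1] (mod ord x)" using N_ord[OF xN x(2)] by simp
    then have "x [^] a = x [^] (1::nat)" using pow_cong[OF xc] by blast
    then have "c0 \<otimes> x \<otimes> inv c0 = x" using xa xc by simp
    then have "c0 \<otimes> x \<otimes> inv c0 \<otimes> c0 = x \<otimes> c0" by simp
    then have "c0 \<otimes> x = x \<otimes> c0" using c0c xc by (simp add: m_assoc)
    then show False using fpf[OF xN c0] x(2) by simp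
  qed
  have "q dvd p - 1" by (rule nt_aux[OF pp qp c1 c2])
  then show False using nd by simp
qed

lemma q2_all:
  assumes q2': "q = 2"
  shows "Fix = Lines"
proof
  show "Fix \<subseteq> Lines" by (rule Fix_sub)
  show "Lines \<subseteq> Fix"
  proof
    fix L assume L: "L \<in> Lines"
    obtain c0 where c0: "c0 \<in> C" "c0 \<noteq> \<one>" using exists_c0 by blast
    have c0c: "c0 \<in> carrier G" using c0 C_car by blast
    have "c0 [^] (2::nat) = \<one>" using ordC[OF c0] pow_ord_eq_1[OF c0c] q2' by simp
    then have cc1: "c0 \<otimes> c0 = \<one>" using c0c by (simp add: numeral_2_eq_2)
    then have ic: "inv c0 = c0" using c0c by (simp add: inv_equality)
    have invx: "c0 \<otimes> x \<otimes> inv c0 = inv x" if xN: "x \<in> N" for x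
    proof -
      have xc: "x \<in> carrier G" using xN N_car by blast
      define w where "w = c0 \<otimes> x \<otimes> c0"
      have wN: "w \<in> N" unfolding w_def using N_normal[OF c0c xN] ic by simp
      have wc: "w \<in> carrier G" using wN N_car by blast
      define y where "y = x \<otimes> w"
      have yN: "y \<in> N" unfolding y_def using N_mult[OF xN wN] .
      have "c0 \<otimes> y = w \<otimes> x \<otimes> c0"
      proof -
        have "w \<otimes> x \<otimes> c0 = c0 \<otimes> (x \<otimes> (c0 \<otimes> (x \<otimes> c0)))" unfolding w_def using c0c xc by (simp add: m_assoc)
        moreover have "c0 \<otimes> y = c0 \<otimes> (x \<otimes> (c0 \<otimes> (x \<otimes> c0)))" unfolding y_def w_def using c0c xc by (simp add: m_assoc)
        ultimately show ?thesis by simp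
      qed
      also have "w \<otimes> x = x \<otimes> w" using N_comm[OF wN xN] .
      finally have "c0 \<otimes> y = y \<otimes> c0" unfolding y_def .
      then have "y = \<one>" using fpf[OF yN c0] by simp
      then have "x \<otimes> w = \<one>" unfolding y_def .
      then have "w = inv x" using xc wc by (metis inv_equality inv_inv m_closed)
      then show ?thesis unfolding w_def using ic by simp
    qed
    have Lc: "L \<subseteq> carrier G" using Lines_car[OF L] .
    have s: "conj_set G c0 L \<subseteq> L"
    proof
      fix z assume "z \<in> conj_set G c0 L"
      then obtain h where h: "h \<in> L" "z = c0 \<otimes> h \<otimes> inv c0" using conj_set_eq[OF c0c Lc] by blast
      have "h \<in> N" using h Lines_D[OF L] by blast
      then have "z = inv h" using h invx by simp
      then show "z \<in> L" using h subgroup.m_inv_closed[OF conjunct1[OF Lines_D[OF L]]] by simp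
    qed
    have finL: "finite L" using Lines_D[OF L] finN finite_subset by blast
    have "card (conj_set G c0 L) = card L" by (rule conj_set_card[OF c0c Lc])
    then have "conj_set G c0 L = L" using card_subset_eq[OF finL s] by simp
    then show "L \<in> Fix" using fix_one_all[OF L c0] by simp
  qed
qed

lemma prod_unique:
  assumes P: "P \<in> Lines" and Q: "Q \<in> Lines" and PQ: "P \<noteq> Q"
    and a: "n \<in> P" "n' \<in> P" "c \<in> Q" "c' \<in> Q" and a5: "n \<otimes> c = n' \<otimes> c'"
  shows "n = n' \<and> c = c'"
proof -
  have Pc: "P \<subseteq> carrier G" "Q \<subseteq> carrier G" using Lines_car P Q by auto
  have nc: "n \<in> carrier G" "n' \<in> carrier G" "c \<in> carrier G" "c' \<in> carrier G" using a Pc by auto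
  have "inv n' \<otimes> (n \<otimes> c) \<otimes> inv c = inv n' \<otimes> (n' \<otimes> c') \<otimes> inv c" using a5 by simp
  then have e: "inv n' \<otimes> n = c' \<otimes> inv c" using nc by (simp add: m_assoc)
  have "inv n' \<otimes> n \<in> P" using a Lines_D[OF P] by (simp add: subgroup.m_closed subgroup.m_inv_closed)
  moreover have "c' \<otimes> inv c \<in> Q" using a Lines_D[OF Q] by (simp add: subgroup.m_closed subgroup.m_inv_closed)
  ultimately have "inv n' \<otimes> n = \<one>" using e lines_disj[OF P Q PQ] by auto
  then have "n' \<otimes> (inv n' \<otimes> n) = n'" using nc by simp
  then have nn: "n = n'" using nc by simp
  then have "c = c'" using a5 nc by simp
  then show ?thesis using nn by simp
qed

lemma three:
  assumes f3: "card Fix \<ge> 3"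
  shows "Fix = Lines"
proof
  show "Fix \<subseteq> Lines" by (rule Fix_sub)
  have finF: "finite Fix" using finLines Fix_sub finite_subset by blast
  obtain L1 L2 L3 where L: "L1 \<in> Fix" "L2 \<in> Fix" "L3 \<in> Fix" "L1 \<noteq> L2" "L1 \<noteq> L3" "L2 \<noteq> L3"
    using card_ge3[OF finF f3] by blast
  have LL: "L1 \<in> Lines" "L2 \<in> Lines" "L3 \<in> Lines" using L Fix_sub by auto
  obtain c0 where c0: "c0 \<in> C" "c0 \<noteq> \<one>" using exists_c0 by blast
  have c0c: "c0 \<in> carrier G" using c0 C_car by blast
  obtain a1 where a1: "\<forall>u\<in>L1. c0 \<otimes> u \<otimes> inv c0 = u [^] (a1::nat)" using fix_exp[OF L(1) c0(1)] by blast
  obtain a2 where a2: "\<forall>u\<in>L2. c0 \<otimes> u \<otimes> inv c0 = u [^] (a2::nat)" using fix_exp[OF L(2) c0(1)] by blast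
  obtain a3 where a3: "\<forall>u\<in>L3. c0 \<otimes> u \<otimes> inv c0 = u [^] (a3::nat)" using fix_exp[OF L(3) c0(1)] by blast
  obtain z where z: "z \<in> L3" "z \<noteq> \<one>" using line_nontriv[OF LL(3)] by blast
  have zN: "z \<in> N" using z Lines_D[OF LL(3)] by blast
  obtain u v where uv: "u \<in> L1" "v \<in> L2" "z = u \<otimes> v" using prod_lines[OF LL(1) LL(2) L(4) zN] by blast
  have uN: "u \<in> N" "v \<in> N" using uv Lines_D[OF LL(1)] Lines_D[OF LL(2)] by auto
  have uc: "u \<in> carrier G" "v \<in> carrier G" using uN N_car by auto
  have L1s: "subgroup L1 G" "subgroup L2 G" "subgroup L3 G" using Lines_D LL by auto
  have u1: "u \<noteq> \<one>"
  proof
    assume "u = \<one>"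
    then have "z \<in> L2" using uv uc by simp
    then show False using z lines_disj[OF LL(2) LL(3) L(6)] by blast
  qed
  have v1: "v \<noteq> \<one>"
  proof
    assume "v = \<one>"
    then have "z \<in> L1" using uv uc by simp
    then show False using z lines_disj[OF LL(1) LL(3) L(5)] by blast
  qed
  have "c0 \<otimes> z \<otimes> inv c0 = (c0 \<otimes> u \<otimes> inv c0) \<otimes> (c0 \<otimes> v \<otimes> inv c0)"
    using uv uc c0c by (simp add: m_assoc)
  then have e1: "c0 \<otimes> z \<otimes> inv c0 = u [^] a1 \<otimes> v [^] a2" using a1 a2 uv by simp
  have "c0 \<otimes> z \<otimes> inv c0 = z [^] a3" using a3 z by blast
  also have "\<dots> = u [^] a3 \<otimes> v [^] a3" using uv pow_mult_distrib[OF N_comm[OF uN] uc] by simp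
  finally have "u [^] a1 \<otimes> v [^] a2 = u [^] a3 \<otimes> v [^] a3" using e1 by simp
  then have "u [^] a1 = u [^] a3 \<and> v [^] a2 = v [^] a3"
    using prod_unique[OF LL(1) LL(2) L(4)] subgroup_pow_closed L1s uv by blast
  then have "[a1 = a3] (mod p)" "[a2 = a3] (mod p)"
    using pow_cong uc N_ord uN u1 v1 by auto
  then have c12: "[a2 = a1] (mod p)" by (metis cong_sym cong_trans)
  have allN: "c0 \<otimes> m \<otimes> inv c0 = m [^] a1" if m: "m \<in> N" for m
  proof -
    obtain u' v' where uv': "u' \<in> L1" "v' \<in> L2" "m = u' \<otimes> v'" using prod_lines[OF LL(1) LL(2) L(4) m] by blast
    have uN': "u' \<in> N" "v' \<in> N" using uv' Lines_D[OF LL(1)] Lines_D[OF LL(2)] by auto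
    have uc': "u' \<in> carrier G" "v' \<in> carrier G" using uN' N_car by auto
    have "v' [^] a2 = v' [^] a1"
    proof (cases "v' = \<one>")
      case True then show ?thesis by simp
    next
      case False
      then show ?thesis using pow_cong[OF uc'(2)] N_ord[OF uN'(2) False] c12 by simp
    qed
    have "c0 \<otimes> m \<otimes> inv c0 = (c0 \<otimes> u' \<otimes> inv c0) \<otimes> (c0 \<otimes> v' \<otimes> inv c0)"
      using uv' uc' c0c by (simp add: m_assoc)
    also have "\<dots> = u' [^] a1 \<otimes> v' [^] a2" using a1 a2 uv' by simp
    also have "\<dots> = u' [^] a1 \<otimes> v' [^] a1" using \<open>v' [^] a2 = v' [^] a1\<close> by simp
    also have "\<dots> = m [^] a1" using uv' pow_mult_distrib[OF N_comm[OF uN'] uc'] by simp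
    finally show ?thesis .
  qed
  show "Lines \<subseteq> Fix"
  proof
    fix L assume L: "L \<in> Lines"
    have Lc: "L \<subseteq> carrier G" using Lines_car[OF L] .
    have s: "conj_set G c0 L \<subseteq> L"
    proof
      fix w assume "w \<in> conj_set G c0 L"
      then obtain h where h: "h \<in> L" "w = c0 \<otimes> h \<otimes> inv c0" using conj_set_eq[OF c0c Lc] by blast
      have "h \<in> N" using h Lines_D[OF L] by blast
      then have "w = h [^] a1" using h allN by simp
      then show "w \<in> L" using h subgroup_pow_closed[OF conjunct1[OF Lines_D[OF L]]] by simp
    qed
    have finL: "finite L" using Lines_D[OF L] finN finite_subset by blast
    have "card (conj_set G c0 L) = card L" by (rule conj_set_card[OF c0c Lc])
    then have "conj_set G c0 L = L" using card_subset_eq[OF finL s] by simp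
    then show "L \<in> Fix" using fix_one_all[OF L c0] by simp
  qed
qed

end

theorem mainTheorem9:
  fixes G (structure) and C :: "'a set" and p q :: nat
  assumes "group G" and "finite (carrier G)"
    and "frobenius_complement G C"
    and "Factorial_Ring.prime p" and "Factorial_Ring.prime q"
    and "elementary_abelian G (frobenius_kernel G C) p"
    and "card (frobenius_kernel G C) = p ^ 2"
    and "card C = q"
  shows "(\<not> q dvd (p - 1) \<longrightarrow> D_count G = (p + 1) div q + 1) \<and>
         (q dvd (p - 1) \<longrightarrow>
            (D_count G = p + 2 \<or> D_count G = (p - 1) div q + 3) \<and>
            (q = 2 \<longrightarrow> D_count G = p + 2))"
proof -
  interpret F: frob G C "frobenius_kernel G C" p q
    using assms by (intro frob.intro frob_axioms.intro) simp_all
  define f where "f = card F.Fix"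
  define b where "b = card (F.orb ` (F.Lines - F.Fix))"
  have D: "D_count G = f + b + 1" using F.D_count_eq F.count1 unfolding f_def b_def by simp
  have finF: "finite F.Fix" using F.finLines F.Fix_sub finite_subset by blast
  have "card (F.Lines - F.Fix) = card F.Lines - card F.Fix"
    using card_Diff_subset[OF finF F.Fix_sub] .
  moreover have "card F.Fix \<le> card F.Lines" using card_mono[OF F.finLines F.Fix_sub] .
  ultimately have "card F.Lines = f + q * b" using F.count2 unfolding f_def b_def by simp
  then have P: "p + 1 = f + q * b" using F.card_Lines by simp
  have p2: "p \<ge> 2" and q2: "q \<ge> 2" using F.p2 F.q2 .
  have allfix: "D_count G = p + 2" if fl: "F.Fix = F.Lines"
  proof -
    have "f = p + 1" unfolding f_def using fl F.card_Lines by simp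
    then have "q * b = 0" using P by simp
    then have "b = 0" using q2 by simp
    then show ?thesis using D \<open>f = p + 1\<close> by simp
  qed
  have part1: "D_count G = (p + 1) div q + 1" if nd: "\<not> q dvd (p - 1)"
  proof -
    have "f = 0" unfolding f_def using F.no_fix[OF nd] by simp
    then have "p + 1 = q * b" using P by simp
    then have "(p + 1) div q = b" using q2 by simp
    then show ?thesis using D \<open>f = 0\<close> by simp
  qed
  have part2: "D_count G = p + 2 \<or> D_count G = (p - 1) div q + 3" if dv: "q dvd (p - 1)"
  proof (cases "q = 2")
    case True
    then show ?thesis using allfix F.q2_all by blast
  next
    case qn2: False
    then have q3: "q \<ge> 3" using q2 by simp
    show ?thesis
    proof (cases "f \<ge> 3")
      case True
      then show ?thesis using allfix F.three unfolding f_def by blast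
    next
      case False
      obtain k where k: "p - 1 = q * k" using dv by blast
      have Pk: "f + q * b = q * k + 2" using P k p2 by simp
      have "f = 0 \<or> f = 1 \<or> f = 2" using False by auto
      then show ?thesis
      proof (elim disjE)
        assume "f = 0"
        then have "q dvd q * k + 2" using Pk by (metis add_0 dvd_triv_left)
        then have "q dvd 2" using dvd_add_right_iff[of q "q * k" 2] by simp
        then have "q \<le> 2" using dvd_imp_le by simp
        then show ?thesis using q3 by simp
      next
        assume "f = 1"
        then have "q * b = q * k + 1" using Pk by simp
        then have "q dvd q * k + 1" by (metis dvd_triv_left)
        then have "q dvd 1" using dvd_add_right_iff[of q "q * k" 1] by simp
        then show ?thesis using q3 by simp
      next
        assume f2: "f = 2"
        then have "q * b = q * k" using Pk by simp
        then have "b = k" using q2 by simp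
        moreover have "(p - 1) div q = k" using k q2 by simp
        ultimately have "D_count G = (p - 1) div q + 3" using D f2 by simp
        then show ?thesis by simp
      qed
    qed
  qed
  show ?thesis using part1 part2 allfix F.q2_all by blast
qed

end
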